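(* Let $R>1$, $C\geq1$ and $\delta\in(0,1)$. Let $h:[-1,1]\setminus\{0\}\to\mathbb R$ satisfy $h(x)\ll e^{|x|^{-1+\delta}}$ for $x\neq0$, and assume $|h(x)|\to\infty$ as $x\to0^\pm$ for some choice of sign $\pm$. Let $\xi:(0,1]\to(0,1]$ satisfy $\lim_{x\to0^+}\xi(x)=0$. Then there exist $\nu>0$ and $\psi:[1,\infty)\to\mathbb R_{>0}$ with $\lim_{t\to+\infty}\psi(t)=+\infty$ such that $$\sup_{(Cj^{1+\delta}\psi(1/z))^{-1}<|x|<1}\frac{|h(x)|}{R^j}<\inf_{0<\pm y\leq\xi(z)}\frac{|h(y)|}{\psi(1/z)}$$ for all integers $j\geq1$ and all $z\in(0,\nu]$.
   Context: In the infimum, $y$ ranges over reals with $0<y\le\xi(z)$ if the sign is $+$, and $0<-y\le\xi(z)$ if the sign is $-$, matching the side on which $|h|\to\infty$. *)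

theory Defs
  imports "HOL-Analysis.Analysis"
begin

end

theory Submission
  imports Defs
begin

lemma bound_lemma:
  fixes R C \<delta> K P :: real and h :: "real \<Rightarrow> real"
  assumes R: "R > 1" and C: "C \<ge> 1" and d: "0 < \<delta>" "\<delta> < 1"
    and K: "\<forall>x. x \<in> {-1..1} - {0} \<longrightarrow> \<bar>h x\<bar> \<le> K * exp (\<bar>x\<bar> powr (-1 + \<delta>))"
    and P: "P \<ge> 1"
  shows "\<exists>B. \<forall>j::nat. \<forall>x. j \<ge> 1 \<longrightarrow> inverse (C * real j powr (1 + \<delta>) * P) < \<bar>x\<bar> \<longrightarrow> \<bar>x\<bar> < 1
           \<longrightarrow> \<bar>h x\<bar> / R ^ j \<le> B"
proof -
  have K0: "K \<ge> 0"
  proof -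
    have "\<bar>h 1\<bar> \<le> K * exp (\<bar>1::real\<bar> powr (-1 + \<delta>))" using K[rule_format, of 1] by simp
    moreover have "exp (\<bar>1::real\<bar> powr (-1 + \<delta>)) > 0" by simp
    ultimately show ?thesis by (smt (verit) zero_le_mult_iff abs_ge_zero)
  qed
  define a where "a = (C * P) powr (1 - \<delta>)"
  define e where "e = 1 - \<delta>\<^sup>2"
  define L where "L = ln R"
  define J where "J = (a / L) powr (1 / \<delta>\<^sup>2)"
  have L0: "L > 0" using R by (simp add: L_def)
  have a0: "a \<ge> 0" by (simp add: a_def)
  have e1: "e \<le> 1" "e > 0" using d by (auto simp: e_def power2_eq_square mult_less_cancel_right1)
    (metis d(2) less_trans mult_less_cancel_right1 mult.commute mult_strict_left_mono mult_1_right d(1))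
  have key: "a * real j powr e - real j * L \<le> max 0 (a * J)" if j: "j \<ge> 1" for j :: nat
  proof (cases "a * real j powr e \<le> real j * L")
    case True then show ?thesis by simp
  next
    case False
    have jr: "real j \<ge> 1" using j by simp
    have split: "real j powr e * real j powr (\<delta>\<^sup>2) = real j"
      using jr by (simp add: e_def powr_add[symmetric])
    have pe: "real j powr e > 0" using jr by simp
    have "real j powr e * (real j powr (\<delta>\<^sup>2) * L) < real j powr e * a"
      using False split by (simp add: algebra_simps)
    hence "real j powr (\<delta>\<^sup>2) * L < a" using pe by simp
    hence lt: "real j powr (\<delta>\<^sup>2) < a / L" using L0 by (simp add: field_simps)
    have "real j = (real j powr (\<delta>\<^sup>2)) powr (1 / \<delta>\<^sup>2)"
      using d jr by (simp add: powr_powr)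
    also have "\<dots> < J" unfolding J_def
      by (rule powr_less_mono2) (use d lt jr in auto)
    finally have jJ: "real j < J" .
    have "real j powr e \<le> real j powr 1" using e1 jr by (intro powr_mono) auto
    hence "a * real j powr e \<le> a * real j" using a0 jr by (simp add: mult_left_mono)
    also have "\<dots> \<le> a * J" using jJ a0 by (simp add: mult_left_mono)
    finally show ?thesis using L0 jr by (smt (verit) mult_nonneg_nonneg)
  qed
  show ?thesis
  proof (intro exI allI impI)
    fix j :: nat and x :: real
    assume j: "j \<ge> 1" and xl: "inverse (C * real j powr (1 + \<delta>) * P) < \<bar>x\<bar>" and xu: "\<bar>x\<bar> < 1"
    have jr: "real j \<ge> 1" using j by simp
    define q where "q = C * real j powr (1 + \<delta>) * P"
    have q0: "q > 0" using C P jr by (simp add: q_def)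
    have xl': "inverse q < \<bar>x\<bar>" using xl by (simp add: q_def)
    have iq: "inverse q > 0" using q0 by simp
    have x0: "x \<noteq> 0" using xl' iq by auto
    have "\<bar>x\<bar> powr (-1 + \<delta>) < (inverse q) powr (-1 + \<delta>)"
      by (rule powr_less_mono2_neg) (use d iq xl' in auto)
    also have "(inverse q) powr (-1 + \<delta>) = q powr (1 - \<delta>)"
      using q0 by (simp add: inverse_powr powr_minus[symmetric])
    also have "q powr (1 - \<delta>) = a * real j powr e"
      using C P jr d unfolding q_def a_def e_def
      by (simp add: powr_mult powr_powr power2_eq_square algebra_simps)
    finally have ex: "\<bar>x\<bar> powr (-1 + \<delta>) < a * real j powr e" .
    have "\<bar>h x\<bar> \<le> K * exp (\<bar>x\<bar> powr (-1 + \<delta>))" using K[rule_format, of x] x0 xu by (auto simp: abs_less_iff)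
    also have "\<dots> \<le> K * exp (a * real j powr e)" using ex K0 by (intro mult_left_mono) auto
    finally have hx: "\<bar>h x\<bar> \<le> K * exp (a * real j powr e)" .
    have Rj: "R ^ j = exp (real j * L)" using R by (simp add: L_def exp_of_nat_mult)
    have "\<bar>h x\<bar> / R ^ j \<le> K * exp (a * real j powr e) / exp (real j * L)"
      using hx Rj by (simp add: divide_right_mono)
    also have "\<dots> = K * exp (a * real j powr e - real j * L)" by (simp add: exp_diff)
    also have "\<dots> \<le> K * exp (max 0 (a * J))" using key[OF j] K0 by (intro mult_left_mono) auto
    finally show "\<bar>h x\<bar> / R ^ j \<le> K * exp (max 0 (a * J))" .
  qed
qed
theorem lemma3p11:
  fixes R C \<delta> \<sigma> :: real
    and h :: "real \<Rightarrow> real"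
    and \<xi> :: "real \<Rightarrow> real"
  assumes R: "R > 1"
    and C: "C \<ge> 1"
    and \<delta>: "0 < \<delta>" "\<delta> < 1"
    and growth: "\<exists>K. \<forall>x. x \<in> {-1..1} - {0} \<longrightarrow> \<bar>h x\<bar> \<le> K * exp (\<bar>x\<bar> powr (-1 + \<delta>))"
    and sign: "\<sigma> = 1 \<or> \<sigma> = -1"
    and blowup: "filterlim (\<lambda>x. \<bar>h x\<bar>) at_top (if \<sigma> = 1 then at_right 0 else at_left 0)"
    and \<xi>_range: "\<forall>x \<in> {0<..1}. \<xi> x \<in> {0<..1}"
    and \<xi>_lim: "(\<xi> \<longlongrightarrow> 0) (at_right 0)"
  shows "\<exists>\<nu> > 0. \<nu> \<le> 1 \<and> (\<exists>\<psi> :: real \<Rightarrow> real.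
           (\<forall>t \<ge> 1. \<psi> t > 0) \<and> filterlim \<psi> at_top at_top \<and>
           (\<forall>j :: nat. \<forall>z. j \<ge> 1 \<longrightarrow> z \<in> {0<..\<nu>} \<longrightarrow>
              (SUP x \<in> {x. inverse (C * real j powr (1 + \<delta>) * \<psi> (1 / z)) < \<bar>x\<bar> \<and> \<bar>x\<bar> < 1}.
                  ereal (\<bar>h x\<bar> / R ^ j))
              < (INF y \<in> {y. 0 < \<sigma> * y \<and> \<sigma> * y \<le> \<xi> z}. ereal (\<bar>h y\<bar> / \<psi> (1 / z)))))"
proof -
  obtain K where K: "\<forall>x. x \<in> {-1..1} - {0} \<longrightarrow> \<bar>h x\<bar> \<le> K * exp (\<bar>x\<bar> powr (-1 + \<delta>))"
    using growth by blast
  have "\<forall>n::nat. \<exists>B. 1 \<le> n \<longrightarrow> (\<forall>j::nat. \<forall>x. j \<ge> 1 \<longrightarrow> inverse (C * real j powr (1 + \<delta>) * real n) < \<bar>x\<bar> \<longrightarrow> \<bar>x\<bar> < 1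
           \<longrightarrow> \<bar>h x\<bar> / R ^ j \<le> B)"
  proof
    fix n :: nat
    show "\<exists>B. 1 \<le> n \<longrightarrow> (\<forall>j::nat. \<forall>x. j \<ge> 1 \<longrightarrow> inverse (C * real j powr (1 + \<delta>) * real n) < \<bar>x\<bar> \<longrightarrow> \<bar>x\<bar> < 1
           \<longrightarrow> \<bar>h x\<bar> / R ^ j \<le> B)"
    proof (cases "1 \<le> n")
      case True
      then have "real n \<ge> 1" by simp
      from bound_lemma[OF R C \<delta> K this] show ?thesis by blast
    qed auto
  qed
  then obtain F where F: "\<And>n. 1 \<le> n \<Longrightarrow> (\<forall>j::nat. \<forall>x. j \<ge> 1 \<longrightarrow> inverse (C * real j powr (1 + \<delta>) * real n) < \<bar>x\<bar> \<longrightarrow> \<bar>x\<bar> < 1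
           \<longrightarrow> \<bar>h x\<bar> / R ^ j \<le> F n)"
    by metis
  have near: "\<exists>d>0. \<forall>y. 0 < \<sigma> * y \<and> \<sigma> * y < d \<longrightarrow> M \<le> \<bar>h y\<bar>" for M
  proof (cases "\<sigma> = 1")
    case True
    with blowup have "eventually (\<lambda>y. M \<le> \<bar>h y\<bar>) (at_right 0)"
      by (simp add: filterlim_at_top)
    then obtain b where "b > 0" "\<forall>y>0. y < b \<longrightarrow> M \<le> \<bar>h y\<bar>"
      using eventually_at_right[of "0::real" 1] by auto
    then show ?thesis using True by (intro exI[of _ b]) auto
  next
    case False
    with sign have s: "\<sigma> = -1" by auto
    with blowup have "eventually (\<lambda>y. M \<le> \<bar>h y\<bar>) (at_left 0)"
      by (simp add: filterlim_at_top)
    then obtain b where "b < 0" "\<forall>y>b. y < 0 \<longrightarrow> M \<le> \<bar>h y\<bar>"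
      using eventually_at_left[of "-1::real" 0] by auto
    then show ?thesis using s by (intro exI[of _ "-b"]) auto
  qed
  have xsmall: "\<exists>T. \<forall>s\<ge>T. \<xi> (1 / s) < d" if d: "d > 0" for d
  proof -
    have "eventually (\<lambda>x. \<xi> x < d) (at_right 0)"
      using order_tendstoD(2)[OF \<xi>_lim d] .
    then obtain b where b: "b > 0" "\<forall>x>0. x < b \<longrightarrow> \<xi> x < d"
      using eventually_at_right[of "0::real" 1] by auto
    show ?thesis
    proof (intro exI allI impI)
      fix s assume s: "2 / b \<le> s"
      have sp: "s > 0" using b s by (smt (verit) divide_pos_pos)
      have "1 / s < b" using s b sp by (simp add: field_simps)
      then show "\<xi> (1 / s) < d" using b sp by auto
    qed
  qed
  define Q where "Q n s \<longleftrightarrow> (\<forall>y. 0 < \<sigma> * y \<and> \<sigma> * y \<le> \<xi> (1 / s) \<longrightarrow> (F n + 1) * real n \<le> \<bar>h y\<bar>)" for n s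
  have Qev: "\<exists>T. \<forall>s\<ge>T. Q n s" for n
  proof -
    obtain d where d: "d > 0" "\<forall>y. 0 < \<sigma> * y \<and> \<sigma> * y < d \<longrightarrow> (F n + 1) * real n \<le> \<bar>h y\<bar>"
      using near by blast
    obtain T where T: "\<forall>s\<ge>T. \<xi> (1 / s) < d" using xsmall[OF d(1)] by blast
    show ?thesis unfolding Q_def
      by (intro exI[of _ T] allI impI) (use T d in force)
  qed
  define S where "S t = {n::nat. real n \<le> t \<and> (\<forall>s\<ge>t. Q n s)}" for t
  define \<psi> where "\<psi> t = real (Max (insert 1 (S t)))" for t
  have finS: "finite (S t)" for t
  proof (rule finite_subset)
    show "S t \<subseteq> {..nat \<lceil>t\<rceil>}" unfolding S_def
      proof (auto)
      fix x :: nat assume "real x \<le> t"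
      then have "real x \<le> real_of_int \<lceil>t\<rceil>" by (meson le_of_int_ceiling order_trans)
      then have "int x \<le> \<lceil>t\<rceil>" by linarith
      then show "x \<le> nat \<lceil>t\<rceil>" by linarith
    qed
  qed auto
  have Max_ge: "n \<in> insert 1 (S t) \<Longrightarrow> n \<le> Max (insert 1 (S t))" for n t
    using finS by (intro Max_ge) auto
  have psi_pos: "\<psi> t \<ge> 1" for t
    unfolding \<psi>_def using Max_ge[of 1 t] by simp
  have lim: "filterlim \<psi> at_top at_top"
    unfolding filterlim_at_top
  proof
    fix Z :: real
    define n where "n = nat \<lceil>Z\<rceil>"
    obtain T where T: "\<forall>s\<ge>T. Q n s" using Qev by blast
    show "eventually (\<lambda>t. Z \<le> \<psi> t) at_top"
      unfolding eventually_at_top_linorder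
    proof (intro exI[of _ "max T (real n)"] allI impI)
      fix t assume t: "max T (real n) \<le> t"
      then have "n \<in> S t" using T unfolding S_def by auto
      then have "n \<le> Max (insert 1 (S t))" using Max_ge by blast
      then have "real n \<le> \<psi> t" unfolding \<psi>_def by simp
      moreover have "Z \<le> real n" unfolding n_def by linarith
      ultimately show "Z \<le> \<psi> t" by linarith
    qed
  qed
  obtain T1 where T1: "\<forall>s\<ge>T1. Q 1 s" using Qev by blast
  define \<nu> where "\<nu> = 1 / max T1 1"
  have \<nu>: "\<nu> > 0" "\<nu> \<le> 1" unfolding \<nu>_def by auto
  show ?thesis
  proof (intro exI[of _ \<nu>] conjI \<nu> exI[of _ \<psi>] allI impI)
    fix t :: real assume "1 \<le> t" then show "\<psi> t > 0" using psi_pos[of t] by linarith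
  next
    show "filterlim \<psi> at_top at_top" by (rule lim)
  next
    fix j :: nat and z :: real
    assume j: "1 \<le> j" and z: "z \<in> {0<..\<nu>}"
    define t where "t = 1 / z"
    have tge: "t \<ge> max T1 1"
    proof -
      have "z \<le> 1 / max T1 1" using z unfolding \<nu>_def by auto
      then have "max T1 1 \<le> 1 / z" using z
        by (metis divide_le_eq_1 le_divide_eq_1_pos less_max_iff_disj max.strict_order_iff
             mult.commute not_le pos_le_divide_eq zero_less_one greaterThanAtMost_iff)
      then show ?thesis unfolding t_def .
    qed
    define m where "m = Max (insert 1 (S t))"
    have m_in: "m \<in> insert 1 (S t)" unfolding m_def using finS by (intro Max_in) auto
    have m1: "1 \<le> m" unfolding m_def using Max_ge[of 1 t] by simp
    have Qm: "Q m t"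
    proof (cases "m = 1")
      case True then show ?thesis using T1 tge by auto
    next
      case False then have "m \<in> S t" using m_in by auto
      then show ?thesis unfolding S_def by auto
    qed
    have psi_eq: "\<psi> (1 / z) = real m" unfolding \<psi>_def m_def t_def by simp
    have mpos: "real m > 0" using m1 by simp
    have "(SUP x \<in> {x. inverse (C * real j powr (1 + \<delta>) * \<psi> (1 / z)) < \<bar>x\<bar> \<and> \<bar>x\<bar> < 1}.
                  ereal (\<bar>h x\<bar> / R ^ j)) \<le> ereal (F m)"
      unfolding psi_eq using F[OF m1] j by (intro SUP_least) auto
    also have "\<dots> < ereal (F m + 1)" by simp
    also have "\<dots> \<le> (INF y \<in> {y. 0 < \<sigma> * y \<and> \<sigma> * y \<le> \<xi> z}. ereal (\<bar>h y\<bar> / \<psi> (1 / z)))"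
    proof (rule INF_greatest)
      fix y assume "y \<in> {y. 0 < \<sigma> * y \<and> \<sigma> * y \<le> \<xi> z}"
      then have "(F m + 1) * real m \<le> \<bar>h y\<bar>" using Qm unfolding Q_def t_def by auto
      then show "ereal (F m + 1) \<le> ereal (\<bar>h y\<bar> / \<psi> (1 / z))"
        unfolding psi_eq using mpos by (simp add: pos_le_divide_eq)
    qed
    finally show "(SUP x \<in> {x. inverse (C * real j powr (1 + \<delta>) * \<psi> (1 / z)) < \<bar>x\<bar> \<and> \<bar>x\<bar> < 1}.
                  ereal (\<bar>h x\<bar> / R ^ j))
              < (INF y \<in> {y. 0 < \<sigma> * y \<and> \<sigma> * y \<le> \<xi> z}. ereal (\<bar>h y\<bar> / \<psi> (1 / z)))" .
  qed
qed

end
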